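(* Let $H_1$ and $H_2$ be reduced valuation monoids such that their quotient groups $\mathsf{q}(H_1)$ and $\mathsf{q}(H_2)$ are isomorphic. Then the reduced finitary power monoids $\mathcal{P}_{\mathrm{fin},1}(H_1)$ and $\mathcal{P}_{\mathrm{fin},1}(H_2)$ are isomorphic.
   Context: All monoids are written multiplicatively. A commutative monoid $H$ is cancellative if $ac=bc$ implies $a=b$ for all $a,b,c\in H$. For a commutative cancellative monoid $H$, $\mathsf{q}(H)$ denotes its quotient (Grothendieck) group, with $H\subseteq \mathsf{q}(H)$ and $\mathsf{q}(H)=\{ab^{-1}: a,b\in H\}$. A commutative cancellative monoid $H$ is a valuation monoid if for every $x\in\mathsf{q}(H)$ we have $x\in H$ or $x^{-1}\in H$; it is reduced if its only invertible element is the identity $1$. For a monoid $H$ with identity $1$, $\mathcal{P}_{\mathrm{fin},1}(H)$ is the set of all finite subsets of $H$ containing $1$, which is a monoid under setwise multiplication $(X,Y)\mapsto\{xy: x\in X, y\in Y\}$ with identity $\{1\}$. *)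

theory Defs
  imports "HOL-Algebra.Group"
begin

definition cancellative_monoid :: "('a, 'm) monoid_scheme \<Rightarrow> bool" where
  "cancellative_monoid H \<longleftrightarrow>
     (\<forall>a\<in>carrier H. \<forall>b\<in>carrier H. \<forall>c\<in>carrier H. a \<otimes>\<^bsub>H\<^esub> c = b \<otimes>\<^bsub>H\<^esub> c \<longrightarrow> a = b)"

definition is_quotient_group ::
  "('a, 'm) monoid_scheme \<Rightarrow> ('b, 'n) monoid_scheme \<Rightarrow> ('a \<Rightarrow> 'b) \<Rightarrow> bool" where
  "is_quotient_group H G f \<longleftrightarrow>
     comm_group G \<and> f \<in> hom H G \<and> inj_on f (carrier H) \<and>
     carrier G = {f a \<otimes>\<^bsub>G\<^esub> inv\<^bsub>G\<^esub> (f b) | a b. a \<in> carrier H \<and> b \<in> carrier H}"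

definition valuation_wrt ::
  "('a, 'm) monoid_scheme \<Rightarrow> ('b, 'n) monoid_scheme \<Rightarrow> ('a \<Rightarrow> 'b) \<Rightarrow> bool" where
  "valuation_wrt H G f \<longleftrightarrow>
     (\<forall>x\<in>carrier G. x \<in> f ` carrier H \<or> inv\<^bsub>G\<^esub> x \<in> f ` carrier H)"

definition reduced_monoid :: "('a, 'm) monoid_scheme \<Rightarrow> bool" where
  "reduced_monoid H \<longleftrightarrow> Units H = {\<one>\<^bsub>H\<^esub>}"

definition Pfin1 :: "('a, 'm) monoid_scheme \<Rightarrow> 'a set monoid" where
  "Pfin1 H = \<lparr> carrier = {X. finite X \<and> X \<subseteq> carrier H \<and> \<one>\<^bsub>H\<^esub> \<in> X},
              mult = (\<lambda>X Y. {x \<otimes>\<^bsub>H\<^esub> y | x y. x \<in> X \<and> y \<in> Y}),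
              one = {\<one>\<^bsub>H\<^esub>} \<rparr>"

end

theory Submission
  imports Defs
begin

definition tr :: "('b,'n) monoid_scheme \<Rightarrow> 'b \<Rightarrow> 'b set \<Rightarrow> 'b set" where
  "tr G g A = (\<lambda>y. g \<otimes>\<^bsub>G\<^esub> y) ` A"

locale qsetup = G: comm_group G + H: comm_monoid H
  for G :: "('c,'o) monoid_scheme" and H :: "('a,'m) monoid_scheme" +
  fixes f :: "'a \<Rightarrow> 'c"
  assumes Q: "is_quotient_group H G f"
    and V: "valuation_wrt H G f" and R: "reduced_monoid H"
begin

lemma fhom: "f \<in> hom H G" using Q unfolding is_quotient_group_def by blast
lemma finj: "inj_on f (carrier H)" using Q unfolding is_quotient_group_def by blast
lemma fcarr: "a \<in> carrier H \<Longrightarrow> f a \<in> carrier G" using fhom by (auto simp: hom_def)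
lemma fmult: "a \<in> carrier H \<Longrightarrow> b \<in> carrier H \<Longrightarrow> f (a \<otimes>\<^bsub>H\<^esub> b) = f a \<otimes>\<^bsub>G\<^esub> f b"
  using fhom by (auto simp: hom_def)
lemma fone: "f \<one>\<^bsub>H\<^esub> = \<one>\<^bsub>G\<^esub>"
proof -
  have c: "f \<one>\<^bsub>H\<^esub> \<in> carrier G" using fcarr by blast
  have "f \<one>\<^bsub>H\<^esub> \<otimes>\<^bsub>G\<^esub> f \<one>\<^bsub>H\<^esub> = f \<one>\<^bsub>H\<^esub>"
    using fmult[of "\<one>\<^bsub>H\<^esub>" "\<one>\<^bsub>H\<^esub>"] c by simp
  then show ?thesis using G.l_cancel_one c by simp
qed

lemma FH_mult: "x \<in> f ` carrier H \<Longrightarrow> y \<in> f ` carrier H \<Longrightarrow> x \<otimes>\<^bsub>G\<^esub> y \<in> f ` carrier H"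
proof -
  assume "x \<in> f ` carrier H" "y \<in> f ` carrier H"
  then obtain a b where "a \<in> carrier H" "b \<in> carrier H" "x = f a" "y = f b" by blast
  then show ?thesis using fmult[of a b] by (metis H.m_closed image_eqI)
qed

lemma uniq:
  assumes Z: "Z \<in> carrier (Pfin1 H)" and Z': "Z' \<in> carrier (Pfin1 H)" and h: "h \<in> carrier G"
    and e: "f ` Z' = tr G h (f ` Z)"
  shows "Z' = Z"
proof -
  have ZH: "Z \<subseteq> carrier H" "\<one>\<^bsub>H\<^esub> \<in> Z" using Z unfolding Pfin1_def by simp_all
  have Z'H: "Z' \<subseteq> carrier H" "\<one>\<^bsub>H\<^esub> \<in> Z'" using Z' unfolding Pfin1_def by simp_all
  have "f \<one>\<^bsub>H\<^esub> \<in> f ` Z'" using Z'H(2) by (rule imageI)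
  then have "\<one>\<^bsub>G\<^esub> \<in> tr G h (f ` Z)" using e fone by simp
  then obtain w where w: "w \<in> f ` Z" "\<one>\<^bsub>G\<^esub> = h \<otimes>\<^bsub>G\<^esub> w" unfolding tr_def by (rule imageE)
  then obtain z where z: "z \<in> Z" "h \<otimes>\<^bsub>G\<^esub> f z = \<one>\<^bsub>G\<^esub>" by (metis imageE)
  have "h \<otimes>\<^bsub>G\<^esub> f \<one>\<^bsub>H\<^esub> \<in> tr G h (f ` Z)" using ZH(2) unfolding tr_def by blast
  moreover have "h \<otimes>\<^bsub>G\<^esub> f \<one>\<^bsub>H\<^esub> = h" using h fone G.r_one by metis
  ultimately have "h \<in> f ` Z'" using e by metis
  then obtain a where a: "a \<in> Z'" "h = f a" by blast
  have aH: "a \<in> carrier H" and zH: "z \<in> carrier H" using a z ZH Z'H by auto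
  have "f (a \<otimes>\<^bsub>H\<^esub> z) = f a \<otimes>\<^bsub>G\<^esub> f z" by (rule fmult[OF aH zH])
  also have "\<dots> = h \<otimes>\<^bsub>G\<^esub> f z" using a(2) by simp
  also have "\<dots> = f \<one>\<^bsub>H\<^esub>" using z(2) fone by simp
  finally have "f (a \<otimes>\<^bsub>H\<^esub> z) = f \<one>\<^bsub>H\<^esub>" .
  moreover have "a \<otimes>\<^bsub>H\<^esub> z \<in> carrier H" using aH zH by (rule H.m_closed)
  ultimately have az: "a \<otimes>\<^bsub>H\<^esub> z = \<one>\<^bsub>H\<^esub>" using finj H.one_closed unfolding inj_on_def by blast
  have za: "z \<otimes>\<^bsub>H\<^esub> a = \<one>\<^bsub>H\<^esub>" using az H.m_comm[OF aH zH] by metis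
  have "a \<in> Units H" using az za aH zH unfolding Units_def by blast
  then have "a = \<one>\<^bsub>H\<^esub>" using R unfolding reduced_monoid_def by blast
  then have h1: "h = \<one>\<^bsub>G\<^esub>" using a fone by simp
  have "\<forall>y\<in>f ` Z. h \<otimes>\<^bsub>G\<^esub> y = y"
  proof
    fix y assume "y \<in> f ` Z"
    then have "y \<in> carrier G" using ZH fcarr by blast
    then show "h \<otimes>\<^bsub>G\<^esub> y = y" using h1 G.l_one by simp
  qed
  then have "(\<lambda>y. h \<otimes>\<^bsub>G\<^esub> y) ` (f ` Z) = (\<lambda>y. y) ` (f ` Z)" by (intro image_cong) auto
  then have "tr G h (f ` Z) = f ` Z" unfolding tr_def by simp
  then have "f ` Z' = f ` Z" using e by simp
  then show ?thesis using inj_on_image_eq_iff[OF finj Z'H(1) ZH(1)] by simp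
qed

lemma tr_tr: "g \<in> carrier G \<Longrightarrow> g' \<in> carrier G \<Longrightarrow> Y \<subseteq> carrier G \<Longrightarrow>
   tr G g (tr G g' Y) = tr G (g \<otimes>\<^bsub>G\<^esub> g') Y"
  unfolding tr_def image_image
proof (rule image_cong[OF refl])
  fix x assume "g \<in> carrier G" "g' \<in> carrier G" "Y \<subseteq> carrier G" "x \<in> Y"
  then show "g \<otimes>\<^bsub>G\<^esub> (g' \<otimes>\<^bsub>G\<^esub> x) = g \<otimes>\<^bsub>G\<^esub> g' \<otimes>\<^bsub>G\<^esub> x" by (simp add: subsetD G.m_assoc)
qed

lemma tr_carr: "g \<in> carrier G \<Longrightarrow> Y \<subseteq> carrier G \<Longrightarrow> tr G g Y \<subseteq> carrier G"
  unfolding tr_def by auto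

lemma minex: "finite Y \<Longrightarrow> Y \<noteq> {} \<Longrightarrow> Y \<subseteq> carrier G \<Longrightarrow>
   \<exists>y0\<in>Y. \<forall>y\<in>Y. inv\<^bsub>G\<^esub> y0 \<otimes>\<^bsub>G\<^esub> y \<in> f ` carrier H"
proof (induction Y rule: finite_ne_induct)
  case (singleton x)
  then have "x \<in> carrier G" by simp
  then have "inv\<^bsub>G\<^esub> x \<otimes>\<^bsub>G\<^esub> x = f \<one>\<^bsub>H\<^esub>" using fone by (simp add: G.l_inv)
  moreover have "f \<one>\<^bsub>H\<^esub> \<in> f ` carrier H" by (rule imageI[OF H.one_closed])
  ultimately show ?case by simp
next
  case (insert x F)
  then obtain y0 where y0: "y0 \<in> F" "\<forall>y\<in>F. inv\<^bsub>G\<^esub> y0 \<otimes>\<^bsub>G\<^esub> y \<in> f ` carrier H" by auto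
  have xG: "x \<in> carrier G" and FG: "F \<subseteq> carrier G" using insert by auto
  have y0G: "y0 \<in> carrier G" using y0 FG by auto
  have "inv\<^bsub>G\<^esub> x \<otimes>\<^bsub>G\<^esub> x = f \<one>\<^bsub>H\<^esub>" using fone G.l_inv[OF xG] by simp
  moreover have "f \<one>\<^bsub>H\<^esub> \<in> f ` carrier H" by (rule imageI[OF H.one_closed])
  ultimately have xx: "inv\<^bsub>G\<^esub> x \<otimes>\<^bsub>G\<^esub> x \<in> f ` carrier H" by simp
  show ?case
  proof (cases "inv\<^bsub>G\<^esub> x \<otimes>\<^bsub>G\<^esub> y0 \<in> f ` carrier H")
    case True
    have "\<forall>y\<in>F. inv\<^bsub>G\<^esub> x \<otimes>\<^bsub>G\<^esub> y \<in> f ` carrier H"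
    proof
      fix y assume yF: "y \<in> F"
      then have yG: "y \<in> carrier G" using FG by auto
      have "inv\<^bsub>G\<^esub> x \<otimes>\<^bsub>G\<^esub> y = (inv\<^bsub>G\<^esub> x \<otimes>\<^bsub>G\<^esub> y0) \<otimes>\<^bsub>G\<^esub> (inv\<^bsub>G\<^esub> y0 \<otimes>\<^bsub>G\<^esub> y)"
      proof -
        have "y0 \<otimes>\<^bsub>G\<^esub> (inv\<^bsub>G\<^esub> y0 \<otimes>\<^bsub>G\<^esub> y) = y" using y0G yG
          by (simp add: G.m_assoc[symmetric] G.r_inv)
        then show ?thesis using xG yG y0G by (simp add: G.m_assoc)
      qed
      then show "inv\<^bsub>G\<^esub> x \<otimes>\<^bsub>G\<^esub> y \<in> f ` carrier H"
        using FH_mult[OF True y0(2)[rule_format, OF yF]] by simp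
    qed
    then show ?thesis using xx by auto
  next
    case False
    have "inv\<^bsub>G\<^esub> (inv\<^bsub>G\<^esub> x \<otimes>\<^bsub>G\<^esub> y0) \<in> f ` carrier H"
    proof -
      have "inv\<^bsub>G\<^esub> x \<otimes>\<^bsub>G\<^esub> y0 \<in> carrier G" using xG y0G by simp
      then have "inv\<^bsub>G\<^esub> x \<otimes>\<^bsub>G\<^esub> y0 \<in> f ` carrier H \<or> inv\<^bsub>G\<^esub> (inv\<^bsub>G\<^esub> x \<otimes>\<^bsub>G\<^esub> y0) \<in> f ` carrier H"
        using V unfolding valuation_wrt_def by blast
      then show ?thesis using False by blast
    qed
    then have "inv\<^bsub>G\<^esub> y0 \<otimes>\<^bsub>G\<^esub> x \<in> f ` carrier H"
      using xG y0G by (simp add: G.inv_mult_group)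
    then show ?thesis using y0 by auto
  qed
qed

lemma exist:
  assumes "finite Y" "Y \<noteq> {}" "Y \<subseteq> carrier G"
  shows "\<exists>Z\<in>carrier (Pfin1 H). \<exists>g\<in>carrier G. f ` Z = tr G g Y"
proof -
  obtain y0 where y0: "y0 \<in> Y" "\<forall>y\<in>Y. inv\<^bsub>G\<^esub> y0 \<otimes>\<^bsub>G\<^esub> y \<in> f ` carrier H"
    using minex assms by blast
  have y0G: "y0 \<in> carrier G" using y0 assms by auto
  define Z where "Z = {a \<in> carrier H. f a \<in> tr G (inv\<^bsub>G\<^esub> y0) Y}"
  have fZ: "f ` Z = tr G (inv\<^bsub>G\<^esub> y0) Y"
  proof
    show "f ` Z \<subseteq> tr G (inv\<^bsub>G\<^esub> y0) Y" unfolding Z_def by auto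
    show "tr G (inv\<^bsub>G\<^esub> y0) Y \<subseteq> f ` Z"
    proof
      fix t assume t: "t \<in> tr G (inv\<^bsub>G\<^esub> y0) Y"
      then have "t \<in> f ` carrier H" using y0 unfolding tr_def by auto
      then obtain a where "a \<in> carrier H" "t = f a" by blast
      then show "t \<in> f ` Z" using t unfolding Z_def by auto
    qed
  qed
  have ZH: "Z \<subseteq> carrier H" unfolding Z_def by auto
  have "finite (f ` Z)" using fZ assms unfolding tr_def by simp
  then have fin: "finite Z" using finite_imageD inj_on_subset[OF finj ZH] by blast
  have "f \<one>\<^bsub>H\<^esub> = inv\<^bsub>G\<^esub> y0 \<otimes>\<^bsub>G\<^esub> y0" using fone G.l_inv[OF y0G] by simp
  then have "f \<one>\<^bsub>H\<^esub> \<in> tr G (inv\<^bsub>G\<^esub> y0) Y" using y0(1) unfolding tr_def by (rule image_eqI)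
  then have "\<one>\<^bsub>H\<^esub> \<in> Z" unfolding Z_def by auto
  then have "Z \<in> carrier (Pfin1 H)" using fin ZH by (simp add: Pfin1_def)
  then show ?thesis using fZ y0G by blast
qed

definition N :: "'c set \<Rightarrow> 'a set" where
  "N Y = (THE Z. Z \<in> carrier (Pfin1 H) \<and> (\<exists>g\<in>carrier G. f ` Z = tr G g Y))"

lemma N_eq:
  assumes Y: "Y \<subseteq> carrier G" and Z: "Z \<in> carrier (Pfin1 H)" and g: "g \<in> carrier G"
    and e: "f ` Z = tr G g Y"
  shows "N Y = Z"
  unfolding N_def
proof (rule the_equality)
  show "Z \<in> carrier (Pfin1 H) \<and> (\<exists>g\<in>carrier G. f ` Z = tr G g Y)" using Z g e by blast
  fix Z' assume "Z' \<in> carrier (Pfin1 H) \<and> (\<exists>g\<in>carrier G. f ` Z' = tr G g Y)"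
  then obtain g' where Z': "Z' \<in> carrier (Pfin1 H)" and g': "g' \<in> carrier G" and e': "f ` Z' = tr G g' Y"
    by blast
  have "tr G (g' \<otimes>\<^bsub>G\<^esub> inv\<^bsub>G\<^esub> g) (f ` Z) = tr G ((g' \<otimes>\<^bsub>G\<^esub> inv\<^bsub>G\<^esub> g) \<otimes>\<^bsub>G\<^esub> g) Y"
  proof -
    have "tr G (g' \<otimes>\<^bsub>G\<^esub> inv\<^bsub>G\<^esub> g) (f ` Z) = tr G (g' \<otimes>\<^bsub>G\<^esub> inv\<^bsub>G\<^esub> g) (tr G g Y)" using e by simp
    also have "\<dots> = tr G ((g' \<otimes>\<^bsub>G\<^esub> inv\<^bsub>G\<^esub> g) \<otimes>\<^bsub>G\<^esub> g) Y" using g g' Y by (intro tr_tr) simp_all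
    finally show ?thesis .
  qed
  also have "(g' \<otimes>\<^bsub>G\<^esub> inv\<^bsub>G\<^esub> g) \<otimes>\<^bsub>G\<^esub> g = g'" using g g' by (simp add: G.m_assoc)
  finally have "f ` Z' = tr G (g' \<otimes>\<^bsub>G\<^esub> inv\<^bsub>G\<^esub> g) (f ` Z)" using e' by simp
  then show "Z' = Z" using uniq[OF Z Z' G.m_closed[OF g' G.inv_closed[OF g]]] by simp
qed

lemma N_in:
  assumes "finite Y" "Y \<noteq> {}" "Y \<subseteq> carrier G"
  shows "N Y \<in> carrier (Pfin1 H) \<and> (\<exists>g\<in>carrier G. f ` N Y = tr G g Y)"
proof -
  obtain Z g where "Z \<in> carrier (Pfin1 H)" "g \<in> carrier G" "f ` Z = tr G g Y"
    using exist[OF assms] by blast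
  moreover then have "N Y = Z" using N_eq assms(3) by blast
  ultimately show ?thesis by blast
qed

lemma Pmult: "X \<otimes>\<^bsub>Pfin1 H\<^esub> Y = {x \<otimes>\<^bsub>H\<^esub> y | x y. x \<in> X \<and> y \<in> Y}"
  by (simp add: Pfin1_def)

lemma f_mult_set: "X \<subseteq> carrier H \<Longrightarrow> Y \<subseteq> carrier H \<Longrightarrow>
  f ` (X \<otimes>\<^bsub>Pfin1 H\<^esub> Y) = {a \<otimes>\<^bsub>G\<^esub> b | a b. a \<in> f ` X \<and> b \<in> f ` Y}"
proof -
  assume XY: "X \<subseteq> carrier H" "Y \<subseteq> carrier H"
  show ?thesis unfolding Pmult
  proof (intro equalityI subsetI)
    fix t assume "t \<in> f ` {x \<otimes>\<^bsub>H\<^esub> y | x y. x \<in> X \<and> y \<in> Y}"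
    then obtain x y where xy: "x \<in> X" "y \<in> Y" "t = f (x \<otimes>\<^bsub>H\<^esub> y)" by blast
    have xyH: "x \<in> carrier H" "y \<in> carrier H" using xy(1,2) XY by (auto simp: subsetD)
    have "t = f x \<otimes>\<^bsub>G\<^esub> f y" using fmult[OF xyH] xy(3) by simp
    moreover have "f x \<in> f ` X" "f y \<in> f ` Y" using xy by simp_all
    ultimately show "t \<in> {a \<otimes>\<^bsub>G\<^esub> b | a b. a \<in> f ` X \<and> b \<in> f ` Y}" by blast
  next
    fix t assume "t \<in> {a \<otimes>\<^bsub>G\<^esub> b | a b. a \<in> f ` X \<and> b \<in> f ` Y}"
    then obtain x y where xy: "x \<in> X" "y \<in> Y" "t = f x \<otimes>\<^bsub>G\<^esub> f y" by blast
    have xyH: "x \<in> carrier H" "y \<in> carrier H" using xy(1,2) XY by (auto simp: subsetD)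
    have "t = f (x \<otimes>\<^bsub>H\<^esub> y)" using fmult[OF xyH] xy(3) by simp
    moreover have "x \<otimes>\<^bsub>H\<^esub> y \<in> {x \<otimes>\<^bsub>H\<^esub> y | x y. x \<in> X \<and> y \<in> Y}" using xy by blast
    ultimately show "t \<in> f ` {x \<otimes>\<^bsub>H\<^esub> y | x y. x \<in> X \<and> y \<in> Y}" by blast
  qed
qed

lemma P_closed: "X \<in> carrier (Pfin1 H) \<Longrightarrow> Y \<in> carrier (Pfin1 H) \<Longrightarrow>
  X \<otimes>\<^bsub>Pfin1 H\<^esub> Y \<in> carrier (Pfin1 H)"
proof -
  assume X: "X \<in> carrier (Pfin1 H)" and Y: "Y \<in> carrier (Pfin1 H)"
  have X1: "finite X" "X \<subseteq> carrier H" "\<one>\<^bsub>H\<^esub> \<in> X" using X unfolding Pfin1_def by simp_all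
  have Y1: "finite Y" "Y \<subseteq> carrier H" "\<one>\<^bsub>H\<^esub> \<in> Y" using Y unfolding Pfin1_def by simp_all
  have "finite {x \<otimes>\<^bsub>H\<^esub> y | x y. x \<in> X \<and> y \<in> Y}" using X1(1) Y1(1) by (intro finite_image_set2) simp_all
  moreover have "{x \<otimes>\<^bsub>H\<^esub> y | x y. x \<in> X \<and> y \<in> Y} \<subseteq> carrier H"
  proof
    fix t assume "t \<in> {x \<otimes>\<^bsub>H\<^esub> y | x y. x \<in> X \<and> y \<in> Y}"
    then obtain x y where "x \<in> X" "y \<in> Y" "t = x \<otimes>\<^bsub>H\<^esub> y" by blast
    then show "t \<in> carrier H" using X1(2) Y1(2) H.m_closed by blast
  qed
  moreover have "\<one>\<^bsub>H\<^esub> \<otimes>\<^bsub>H\<^esub> \<one>\<^bsub>H\<^esub> \<in> {x \<otimes>\<^bsub>H\<^esub> y | x y. x \<in> X \<and> y \<in> Y}" using X1(3) Y1(3) by blast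
  then have "\<one>\<^bsub>H\<^esub> \<in> {x \<otimes>\<^bsub>H\<^esub> y | x y. x \<in> X \<and> y \<in> Y}" by simp
  ultimately show ?thesis unfolding Pmult by (simp add: Pfin1_def)
qed

lemma tr_one: "Y \<subseteq> carrier G \<Longrightarrow> tr G \<one>\<^bsub>G\<^esub> Y = Y"
proof -
  assume Y: "Y \<subseteq> carrier G"
  have "(\<lambda>y. \<one>\<^bsub>G\<^esub> \<otimes>\<^bsub>G\<^esub> y) ` Y = (\<lambda>y. y) ` Y" using Y by (intro image_cong) (simp_all add: subsetD)
  then show ?thesis unfolding tr_def by simp
qed

lemma sp_tr: "A \<subseteq> carrier G \<Longrightarrow> B \<subseteq> carrier G \<Longrightarrow> g \<in> carrier G \<Longrightarrow> h \<in> carrier G \<Longrightarrow>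
  {a \<otimes>\<^bsub>G\<^esub> b | a b. a \<in> tr G g A \<and> b \<in> tr G h B} = tr G (g \<otimes>\<^bsub>G\<^esub> h) {a \<otimes>\<^bsub>G\<^esub> b | a b. a \<in> A \<and> b \<in> B}"
proof -
  assume AB: "A \<subseteq> carrier G" "B \<subseteq> carrier G" and gh: "g \<in> carrier G" "h \<in> carrier G"
  have k: "(g \<otimes>\<^bsub>G\<^esub> a) \<otimes>\<^bsub>G\<^esub> (h \<otimes>\<^bsub>G\<^esub> b) = (g \<otimes>\<^bsub>G\<^esub> h) \<otimes>\<^bsub>G\<^esub> (a \<otimes>\<^bsub>G\<^esub> b)"
    if ab: "a \<in> carrier G" "b \<in> carrier G" for a b
  proof -
    have "(g \<otimes>\<^bsub>G\<^esub> a) \<otimes>\<^bsub>G\<^esub> (h \<otimes>\<^bsub>G\<^esub> b) = g \<otimes>\<^bsub>G\<^esub> (a \<otimes>\<^bsub>G\<^esub> (h \<otimes>\<^bsub>G\<^esub> b))"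
      using ab gh by (simp add: G.m_assoc)
    also have "a \<otimes>\<^bsub>G\<^esub> (h \<otimes>\<^bsub>G\<^esub> b) = h \<otimes>\<^bsub>G\<^esub> (a \<otimes>\<^bsub>G\<^esub> b)" by (rule G.m_lcomm[OF ab(1) gh(2) ab(2)])
    also have "g \<otimes>\<^bsub>G\<^esub> (h \<otimes>\<^bsub>G\<^esub> (a \<otimes>\<^bsub>G\<^esub> b)) = (g \<otimes>\<^bsub>G\<^esub> h) \<otimes>\<^bsub>G\<^esub> (a \<otimes>\<^bsub>G\<^esub> b)"
      using ab gh by (simp add: G.m_assoc)
    finally show ?thesis .
  qed
  show ?thesis unfolding tr_def
  proof (intro equalityI subsetI)
    fix x assume "x \<in> {a \<otimes>\<^bsub>G\<^esub> b | a b. a \<in> (\<otimes>\<^bsub>G\<^esub>) g ` A \<and> b \<in> (\<otimes>\<^bsub>G\<^esub>) h ` B}"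
    then obtain a b where ab: "a \<in> A" "b \<in> B" "x = (g \<otimes>\<^bsub>G\<^esub> a) \<otimes>\<^bsub>G\<^esub> (h \<otimes>\<^bsub>G\<^esub> b)" by blast
    have abG: "a \<in> carrier G" "b \<in> carrier G" using ab(1,2) AB by (auto simp: subsetD)
    have "x = (g \<otimes>\<^bsub>G\<^esub> h) \<otimes>\<^bsub>G\<^esub> (a \<otimes>\<^bsub>G\<^esub> b)" using k[OF abG] ab(3) by simp
    moreover have "a \<otimes>\<^bsub>G\<^esub> b \<in> {a \<otimes>\<^bsub>G\<^esub> b | a b. a \<in> A \<and> b \<in> B}" using ab by blast
    ultimately show "x \<in> (\<otimes>\<^bsub>G\<^esub>) (g \<otimes>\<^bsub>G\<^esub> h) ` {a \<otimes>\<^bsub>G\<^esub> b | a b. a \<in> A \<and> b \<in> B}"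
      by (rule image_eqI)
  next
    fix x assume "x \<in> (\<otimes>\<^bsub>G\<^esub>) (g \<otimes>\<^bsub>G\<^esub> h) ` {a \<otimes>\<^bsub>G\<^esub> b | a b. a \<in> A \<and> b \<in> B}"
    then obtain a b where ab: "a \<in> A" "b \<in> B" "x = (g \<otimes>\<^bsub>G\<^esub> h) \<otimes>\<^bsub>G\<^esub> (a \<otimes>\<^bsub>G\<^esub> b)" by blast
    have abG: "a \<in> carrier G" "b \<in> carrier G" using ab(1,2) AB by (auto simp: subsetD)
    have "x = (g \<otimes>\<^bsub>G\<^esub> a) \<otimes>\<^bsub>G\<^esub> (h \<otimes>\<^bsub>G\<^esub> b)" using k[OF abG] ab(3) by simp
    moreover have "g \<otimes>\<^bsub>G\<^esub> a \<in> (\<otimes>\<^bsub>G\<^esub>) g ` A" "h \<otimes>\<^bsub>G\<^esub> b \<in> (\<otimes>\<^bsub>G\<^esub>) h ` B" using ab by simp_all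
    ultimately show "x \<in> {a \<otimes>\<^bsub>G\<^esub> b | a b. a \<in> (\<otimes>\<^bsub>G\<^esub>) g ` A \<and> b \<in> (\<otimes>\<^bsub>G\<^esub>) h ` B}"
      by blast
  qed
qed

end

lemma hom_sp: "\<phi> \<in> hom G1 G2 \<Longrightarrow> A \<subseteq> carrier G1 \<Longrightarrow> B \<subseteq> carrier G1 \<Longrightarrow>
  \<phi> ` {a \<otimes>\<^bsub>G1\<^esub> b | a b. a \<in> A \<and> b \<in> B} = {a \<otimes>\<^bsub>G2\<^esub> b | a b. a \<in> \<phi> ` A \<and> b \<in> \<phi> ` B}"
proof -
  assume h: "\<phi> \<in> hom G1 G2" and AB: "A \<subseteq> carrier G1" "B \<subseteq> carrier G1"
  have hm: "\<forall>x\<in>carrier G1. \<forall>y\<in>carrier G1. \<phi> (x \<otimes>\<^bsub>G1\<^esub> y) = \<phi> x \<otimes>\<^bsub>G2\<^esub> \<phi> y"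
    using h unfolding hom_def by simp
  have m: "\<phi> (a \<otimes>\<^bsub>G1\<^esub> b) = \<phi> a \<otimes>\<^bsub>G2\<^esub> \<phi> b" if "a \<in> A" "b \<in> B" for a b
  proof -
    have "a \<in> carrier G1" "b \<in> carrier G1" using that AB by (auto simp: subsetD)
    then show ?thesis using hm by simp
  qed
  show ?thesis
  proof (intro equalityI subsetI)
    fix x assume "x \<in> \<phi> ` {a \<otimes>\<^bsub>G1\<^esub> b | a b. a \<in> A \<and> b \<in> B}"
    then obtain a b where ab: "a \<in> A" "b \<in> B" "x = \<phi> (a \<otimes>\<^bsub>G1\<^esub> b)" by blast
    then have "x = \<phi> a \<otimes>\<^bsub>G2\<^esub> \<phi> b" using m[OF ab(1,2)] by simp
    moreover have "\<phi> a \<in> \<phi> ` A" "\<phi> b \<in> \<phi> ` B" using ab by simp_all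
    ultimately show "x \<in> {a \<otimes>\<^bsub>G2\<^esub> b | a b. a \<in> \<phi> ` A \<and> b \<in> \<phi> ` B}" by blast
  next
    fix x assume "x \<in> {a \<otimes>\<^bsub>G2\<^esub> b | a b. a \<in> \<phi> ` A \<and> b \<in> \<phi> ` B}"
    then obtain a b where ab: "a \<in> A" "b \<in> B" "x = \<phi> a \<otimes>\<^bsub>G2\<^esub> \<phi> b" by blast
    then have "x = \<phi> (a \<otimes>\<^bsub>G1\<^esub> b)" using m[OF ab(1,2)] by simp
    moreover have "a \<otimes>\<^bsub>G1\<^esub> b \<in> {a \<otimes>\<^bsub>G1\<^esub> b | a b. a \<in> A \<and> b \<in> B}" using ab by blast
    ultimately show "x \<in> \<phi> ` {a \<otimes>\<^bsub>G1\<^esub> b | a b. a \<in> A \<and> b \<in> B}" by (rule image_eqI)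
  qed
qed

lemma hom_tr: "\<phi> \<in> hom G1 G2 \<Longrightarrow> A \<subseteq> carrier G1 \<Longrightarrow> k \<in> carrier G1 \<Longrightarrow>
  \<phi> ` tr G1 k A = tr G2 (\<phi> k) (\<phi> ` A)"
  unfolding tr_def image_image
proof (rule image_cong[OF refl])
  fix x assume h: "\<phi> \<in> hom G1 G2" and A: "A \<subseteq> carrier G1" and k: "k \<in> carrier G1" and x: "x \<in> A"
  have hm: "\<forall>x\<in>carrier G1. \<forall>y\<in>carrier G1. \<phi> (x \<otimes>\<^bsub>G1\<^esub> y) = \<phi> x \<otimes>\<^bsub>G2\<^esub> \<phi> y"
    using h unfolding hom_def by simp
  have "x \<in> carrier G1" using x A by (auto simp: subsetD)
  then show "\<phi> (k \<otimes>\<^bsub>G1\<^esub> x) = \<phi> k \<otimes>\<^bsub>G2\<^esub> \<phi> x" using hm k by simp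
qed


theorem theorem2:
  fixes H1 :: "('a, 'm) monoid_scheme" and H2 :: "('b, 'n) monoid_scheme"
    and G1 :: "('c, 'o) monoid_scheme" and G2 :: "('d, 'p) monoid_scheme"
    and f1 :: "'a \<Rightarrow> 'c" and f2 :: "'b \<Rightarrow> 'd"
  assumes "comm_monoid H1" and "cancellative_monoid H1"
    and "comm_monoid H2" and "cancellative_monoid H2"
    and "is_quotient_group H1 G1 f1" and "is_quotient_group H2 G2 f2"
    and "valuation_wrt H1 G1 f1" and "valuation_wrt H2 G2 f2"
    and "reduced_monoid H1" and "reduced_monoid H2"
    and "G1 \<cong> G2"
  shows "Pfin1 H1 \<cong> Pfin1 H2"
proof -
  have cg1: "comm_group G1" using assms(5) unfolding is_quotient_group_def by blast
  have cg2: "comm_group G2" using assms(6) unfolding is_quotient_group_def by blast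
  have q1: "qsetup G1 H1 f1"
    by (intro qsetup.intro qsetup_axioms.intro cg1 assms(1) assms(5) assms(7) assms(9))
  have q2: "qsetup G2 H2 f2"
    by (intro qsetup.intro qsetup_axioms.intro cg2 assms(3) assms(6) assms(8) assms(10))
  interpret A: qsetup G1 H1 f1 by (rule q1)
  interpret B: qsetup G2 H2 f2 by (rule q2)
  obtain \<phi> where "\<phi> \<in> iso G1 G2" using assms(11) unfolding is_iso_def by blast
  then have ph: "\<phi> \<in> hom G1 G2" and pb: "bij_betw \<phi> (carrier G1) (carrier G2)"
    unfolding iso_def by simp_all
  have pfun: "\<phi> \<in> carrier G1 \<rightarrow> carrier G2" using ph unfolding hom_def by simp
  have pc: "\<phi> x \<in> carrier G2" if "x \<in> carrier G1" for x using pfun that by (rule funcset_mem)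
  have pinj: "inj_on \<phi> (carrier G1)" and psurj: "\<phi> ` carrier G1 = carrier G2"
    using pb unfolding bij_betw_def by simp_all
  define \<Psi> where "\<Psi> X = B.N (\<phi> ` f1 ` X)" for X
  have PH1: "finite X" "X \<subseteq> carrier H1" "\<one>\<^bsub>H1\<^esub> \<in> X" if "X \<in> carrier (Pfin1 H1)" for X
    using that unfolding Pfin1_def by simp_all
  have PH2: "finite X" "X \<subseteq> carrier H2" "\<one>\<^bsub>H2\<^esub> \<in> X" if "X \<in> carrier (Pfin1 H2)" for X
    using that unfolding Pfin1_def by simp_all
  have Ysub: "f1 ` X \<subseteq> carrier G1" if "X \<in> carrier (Pfin1 H1)" for X
  proof (rule image_subsetI)
    fix x assume "x \<in> X" then show "f1 x \<in> carrier G1" using PH1(2)[OF that] A.fcarr by blast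
  qed
  have Yprops: "finite (\<phi> ` f1 ` X) \<and> \<phi> ` f1 ` X \<noteq> {} \<and> \<phi> ` f1 ` X \<subseteq> carrier G2"
    if "X \<in> carrier (Pfin1 H1)" for X
  proof (intro conjI)
    show "finite (\<phi> ` f1 ` X)" using PH1(1)[OF that] by simp
    show "\<phi> ` f1 ` X \<noteq> {}" using PH1(3)[OF that] by blast
    show "\<phi> ` f1 ` X \<subseteq> carrier G2" using Ysub[OF that] pc by blast
  qed
  have Psi: "\<Psi> X \<in> carrier (Pfin1 H2) \<and> (\<exists>g\<in>carrier G2. f2 ` \<Psi> X = tr G2 g (\<phi> ` f1 ` X))"
    if "X \<in> carrier (Pfin1 H1)" for X
    unfolding \<Psi>_def using Yprops[OF that] by (intro B.N_in) simp_all
  have hom: "\<Psi> \<in> hom (Pfin1 H1) (Pfin1 H2)"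
  proof (rule homI)
    fix X assume "X \<in> carrier (Pfin1 H1)" then show "\<Psi> X \<in> carrier (Pfin1 H2)" using Psi by blast
  next
    fix X Y assume X: "X \<in> carrier (Pfin1 H1)" and Y: "Y \<in> carrier (Pfin1 H1)"
    obtain g1 where g1: "g1 \<in> carrier G2" "f2 ` \<Psi> X = tr G2 g1 (\<phi> ` f1 ` X)" using Psi[OF X] by blast
    obtain g2 where g2: "g2 \<in> carrier G2" "f2 ` \<Psi> Y = tr G2 g2 (\<phi> ` f1 ` Y)" using Psi[OF Y] by blast
    have PX: "\<Psi> X \<in> carrier (Pfin1 H2)" and PY: "\<Psi> Y \<in> carrier (Pfin1 H2)" using Psi X Y by blast+
    have e1: "\<phi> ` f1 ` (X \<otimes>\<^bsub>Pfin1 H1\<^esub> Y) =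
        {a \<otimes>\<^bsub>G2\<^esub> b | a b. a \<in> \<phi> ` f1 ` X \<and> b \<in> \<phi> ` f1 ` Y}"
      unfolding A.f_mult_set[OF PH1(2)[OF X] PH1(2)[OF Y]] by (rule hom_sp[OF ph Ysub[OF X] Ysub[OF Y]])
    have "f2 ` (\<Psi> X \<otimes>\<^bsub>Pfin1 H2\<^esub> \<Psi> Y) = {a \<otimes>\<^bsub>G2\<^esub> b | a b. a \<in> f2 ` \<Psi> X \<and> b \<in> f2 ` \<Psi> Y}"
      by (rule B.f_mult_set[OF PH2(2)[OF PX] PH2(2)[OF PY]])
    also have "\<dots> = tr G2 (g1 \<otimes>\<^bsub>G2\<^esub> g2) {a \<otimes>\<^bsub>G2\<^esub> b | a b. a \<in> \<phi> ` f1 ` X \<and> b \<in> \<phi> ` f1 ` Y}"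
      unfolding g1(2) g2(2)
      using B.sp_tr[of "\<phi> ` f1 ` X" "\<phi> ` f1 ` Y" g1 g2] Yprops[OF X] Yprops[OF Y] g1(1) g2(1)
      by simp
    also have "\<dots> = tr G2 (g1 \<otimes>\<^bsub>G2\<^esub> g2) (\<phi> ` f1 ` (X \<otimes>\<^bsub>Pfin1 H1\<^esub> Y))"
      unfolding e1 ..
    finally have e2: "f2 ` (\<Psi> X \<otimes>\<^bsub>Pfin1 H2\<^esub> \<Psi> Y) = tr G2 (g1 \<otimes>\<^bsub>G2\<^esub> g2) (\<phi> ` f1 ` (X \<otimes>\<^bsub>Pfin1 H1\<^esub> Y))" .
    have XY: "X \<otimes>\<^bsub>Pfin1 H1\<^esub> Y \<in> carrier (Pfin1 H1)" by (rule A.P_closed[OF X Y])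
    have ysub: "\<phi> ` f1 ` (X \<otimes>\<^bsub>Pfin1 H1\<^esub> Y) \<subseteq> carrier G2" using Yprops[OF XY] by simp
    show "\<Psi> (X \<otimes>\<^bsub>Pfin1 H1\<^esub> Y) = \<Psi> X \<otimes>\<^bsub>Pfin1 H2\<^esub> \<Psi> Y"
      unfolding \<Psi>_def[of "X \<otimes>\<^bsub>Pfin1 H1\<^esub> Y"]
      by (rule B.N_eq[OF ysub B.P_closed[OF PX PY] B.G.m_closed[OF g1(1) g2(1)] e2])
  qed
  have inj: "inj_on \<Psi> (carrier (Pfin1 H1))"
  proof (rule inj_onI)
    fix X X' assume X: "X \<in> carrier (Pfin1 H1)" and X': "X' \<in> carrier (Pfin1 H1)" and e: "\<Psi> X = \<Psi> X'"
    obtain g where g: "g \<in> carrier G2" "f2 ` \<Psi> X = tr G2 g (\<phi> ` f1 ` X)" using Psi[OF X] by blast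
    obtain g' where g': "g' \<in> carrier G2" "f2 ` \<Psi> X' = tr G2 g' (\<phi> ` f1 ` X')" using Psi[OF X'] by blast
    have ig': "inv\<^bsub>G2\<^esub> g' \<in> carrier G2" using g'(1) by (rule B.G.inv_closed)
    have s1: "\<phi> ` f1 ` X \<subseteq> carrier G2" and s2: "\<phi> ` f1 ` X' \<subseteq> carrier G2"
      using Yprops[OF X] Yprops[OF X'] by simp_all
    have eq0: "tr G2 g (\<phi> ` f1 ` X) = tr G2 g' (\<phi> ` f1 ` X')" using g(2) g'(2) e by simp
    have "tr G2 (inv\<^bsub>G2\<^esub> g' \<otimes>\<^bsub>G2\<^esub> g) (\<phi> ` f1 ` X) = tr G2 (inv\<^bsub>G2\<^esub> g') (tr G2 g (\<phi> ` f1 ` X))"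
      using B.tr_tr[OF ig' g(1) s1] by simp
    also have "\<dots> = tr G2 (inv\<^bsub>G2\<^esub> g') (tr G2 g' (\<phi> ` f1 ` X'))" using eq0 by simp
    also have "\<dots> = tr G2 (inv\<^bsub>G2\<^esub> g' \<otimes>\<^bsub>G2\<^esub> g') (\<phi> ` f1 ` X')"
      using B.tr_tr[OF ig' g'(1) s2] by simp
    also have "inv\<^bsub>G2\<^esub> g' \<otimes>\<^bsub>G2\<^esub> g' = \<one>\<^bsub>G2\<^esub>" using g'(1) by (rule B.G.l_inv)
    also have "tr G2 \<one>\<^bsub>G2\<^esub> (\<phi> ` f1 ` X') = \<phi> ` f1 ` X'" using s2 by (rule B.tr_one)
    finally have eq1: "tr G2 (inv\<^bsub>G2\<^esub> g' \<otimes>\<^bsub>G2\<^esub> g) (\<phi> ` f1 ` X) = \<phi> ` f1 ` X'" .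
    have "inv\<^bsub>G2\<^esub> g' \<otimes>\<^bsub>G2\<^esub> g \<in> carrier G2" using ig' g(1) by (rule B.G.m_closed)
    then have "inv\<^bsub>G2\<^esub> g' \<otimes>\<^bsub>G2\<^esub> g \<in> \<phi> ` carrier G1" using psurj by simp
    then obtain k where k: "k \<in> carrier G1" "inv\<^bsub>G2\<^esub> g' \<otimes>\<^bsub>G2\<^esub> g = \<phi> k" by (rule imageE)
    have "\<phi> ` tr G1 k (f1 ` X) = tr G2 (\<phi> k) (\<phi> ` f1 ` X)" by (rule hom_tr[OF ph Ysub[OF X] k(1)])
    also have "\<dots> = \<phi> ` f1 ` X'" using eq1 k(2) by simp
    finally have "\<phi> ` tr G1 k (f1 ` X) = \<phi> ` f1 ` X'" .
    then have "tr G1 k (f1 ` X) = f1 ` X'"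
      using inj_on_image_eq_iff[OF pinj A.tr_carr[OF k(1) Ysub[OF X]] Ysub[OF X']] by simp
    then have "X' = X" using A.uniq[OF X X' k(1)] by simp
    then show "X = X'" by simp
  qed
  have surj: "\<Psi> ` carrier (Pfin1 H1) = carrier (Pfin1 H2)"
  proof
    show "\<Psi> ` carrier (Pfin1 H1) \<subseteq> carrier (Pfin1 H2)" using Psi by blast
    show "carrier (Pfin1 H2) \<subseteq> \<Psi> ` carrier (Pfin1 H1)"
    proof
      fix Z assume Z: "Z \<in> carrier (Pfin1 H2)"
      have fZ1: "f2 ` Z \<subseteq> carrier G2" using PH2(2)[OF Z] B.fcarr by blast
      have fZ2: "finite (f2 ` Z)" using PH2(1)[OF Z] by simp
      have fZ3: "f2 ` Z \<noteq> {}" using PH2(3)[OF Z] by blast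
      define Y where "Y = {y \<in> carrier G1. \<phi> y \<in> f2 ` Z}"
      have pY: "\<phi> ` Y = f2 ` Z"
      proof
        show "\<phi> ` Y \<subseteq> f2 ` Z" unfolding Y_def by blast
        show "f2 ` Z \<subseteq> \<phi> ` Y"
        proof
          fix t assume t: "t \<in> f2 ` Z"
          then have "t \<in> \<phi> ` carrier G1" using fZ1 psurj by blast
          then obtain y where "y \<in> carrier G1" "t = \<phi> y" by (rule imageE)
          then show "t \<in> \<phi> ` Y" using t unfolding Y_def by blast
        qed
      qed
      have YG: "Y \<subseteq> carrier G1" unfolding Y_def by blast
      have fin: "finite Y" using finite_imageD[of \<phi> Y] pY fZ2 inj_on_subset[OF pinj YG] by simp
      have ne: "Y \<noteq> {}" using pY fZ3 by auto
      obtain X where X: "X \<in> carrier (Pfin1 H1)" and "\<exists>g\<in>carrier G1. f1 ` X = tr G1 g Y"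
        using A.exist[OF fin ne YG] by blast
      then obtain g where g: "g \<in> carrier G1" and e: "f1 ` X = tr G1 g Y" by blast
      have pg: "\<phi> g \<in> carrier G2" using pc[OF g] .
      have ipg: "inv\<^bsub>G2\<^esub> \<phi> g \<in> carrier G2" using pg by (rule B.G.inv_closed)
      have e3: "\<phi> ` f1 ` X = tr G2 (\<phi> g) (f2 ` Z)" using e hom_tr[OF ph YG g] pY by simp
      have "tr G2 (inv\<^bsub>G2\<^esub> \<phi> g) (\<phi> ` f1 ` X) = tr G2 (inv\<^bsub>G2\<^esub> \<phi> g \<otimes>\<^bsub>G2\<^esub> \<phi> g) (f2 ` Z)"
        unfolding e3 by (rule B.tr_tr[OF ipg pg fZ1])
      also have "inv\<^bsub>G2\<^esub> \<phi> g \<otimes>\<^bsub>G2\<^esub> \<phi> g = \<one>\<^bsub>G2\<^esub>" using pg by (rule B.G.l_inv)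
      also have "tr G2 \<one>\<^bsub>G2\<^esub> (f2 ` Z) = f2 ` Z" using fZ1 by (rule B.tr_one)
      finally have e4: "f2 ` Z = tr G2 (inv\<^bsub>G2\<^esub> \<phi> g) (\<phi> ` f1 ` X)" by simp
      have ysub: "\<phi> ` f1 ` X \<subseteq> carrier G2" using Yprops[OF X] by simp
      have "\<Psi> X = Z" unfolding \<Psi>_def by (rule B.N_eq[OF ysub Z ipg e4])
      then show "Z \<in> \<Psi> ` carrier (Pfin1 H1)" using X by blast
    qed
  qed
  have "bij_betw \<Psi> (carrier (Pfin1 H1)) (carrier (Pfin1 H2))"
    unfolding bij_betw_def using inj surj by simp
  then have "\<Psi> \<in> iso (Pfin1 H1) (Pfin1 H2)" by (rule isoI[OF hom])
  then show ?thesis by (rule is_isoI)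
qed

end
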